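(* Let $\Phi = \{\xi = (\tau_L,\delta_L,\tau_R,\delta_R) \in \mathbb{R}^4 : \tau_L > |\delta_L + 1|,\ \tau_R < -|\delta_R+1|\}$, $\Phi^{(1)} = \{\xi \in \Phi : \delta_L > 0, \delta_R > 0\}$, $\Phi^{(2)} = \{\xi \in \Phi : \delta_L < 0, \delta_R < 0\}$. Let $\alpha(\xi) = \tau_L\tau_R + (\delta_L-1)(\delta_R-1)$, $g(\xi) = (\tau_R^2 - 2\delta_R,\ \delta_R^2,\ \tau_L\tau_R - \delta_L - \delta_R,\ \delta_L\delta_R)$, and for $\xi\in\Phi$ $$\phi^+(\xi) = \delta_R - \big(\tau_R + \delta_L + \delta_R - (1+\tau_R)\lambda_L^u\big)\lambda_L^u,$$ where $\lambda_L^u > 1$ is the eigenvalue of $\begin{bmatrix}\tau_L & 1\\ -\delta_L & 0\end{bmatrix}$ of modulus greater than one. Define, for $n \ge 0$, $$\mathcal{R}^{(1)}_n = \{\xi \in \Phi^{(1)} : \phi^+(g^n(\xi)) > 0,\ \phi^+(g^{n+1}(\xi)) \le 0\},$$ and for $n \ge 1$, $$\mathcal{R}^{(2)}_n = \{\xi \in \Phi^{(2)} : \phi^+(g^n(\xi)) > 0,\ \phi^+(g^{n+1}(\xi)) \le 0,\ \alpha(\xi) < 0\}.$$ If $\xi \in \mathcal{R}^{(2)}_n$ with $n \ge 1$, then $g(\xi) \in \mathcal{R}^{(1)}_{n-1}$.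
   Context: $g^n$ denotes the $n$-fold composition of $g$; the conditions in the set definitions are understood to include that the relevant iterates $g^k(\xi)$ lie in $\Phi$, so that $\phi^+$ is defined at them. *)

theory Defs
  imports Complex_Main
begin

type_synonym param = "real \<times> real \<times> real \<times> real"

definition Phi :: "param set" where
  "Phi = {(tL, dL, tR, dR). tL > \<bar>dL + 1\<bar> \<and> tR < - \<bar>dR + 1\<bar>}"

definition Phi1 :: "param set" where
  "Phi1 = {\<xi> \<in> Phi. case \<xi> of (tL, dL, tR, dR) \<Rightarrow> dL > 0 \<and> dR > 0}"

definition Phi2 :: "param set" where
  "Phi2 = {\<xi> \<in> Phi. case \<xi> of (tL, dL, tR, dR) \<Rightarrow> dL < 0 \<and> dR < 0}"

definition alpha :: "param \<Rightarrow> real" where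
  "alpha \<xi> = (case \<xi> of (tL, dL, tR, dR) \<Rightarrow> tL * tR + (dL - 1) * (dR - 1))"

definition g :: "param \<Rightarrow> param" where
  "g \<xi> = (case \<xi> of (tL, dL, tR, dR) \<Rightarrow>
      (tR\<^sup>2 - 2 * dR, dR\<^sup>2, tL * tR - dL - dR, dL * dR))"

definition lambdaLu :: "real \<Rightarrow> real \<Rightarrow> real" where
  "lambdaLu tL dL = (THE l. (tL - l) * (0 - l) - 1 * (- dL) = 0 \<and> \<bar>l\<bar> > 1)"

definition phi_plus :: "param \<Rightarrow> real" where
  "phi_plus \<xi> = (case \<xi> of (tL, dL, tR, dR) \<Rightarrow>
      dR - (tR + dL + dR - (1 + tR) * lambdaLu tL dL) * lambdaLu tL dL)"

definition R1 :: "nat \<Rightarrow> param set" where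
  "R1 n = {\<xi> \<in> Phi1. (g ^^ n) \<xi> \<in> Phi \<and> (g ^^ (n + 1)) \<xi> \<in> Phi \<and>
      phi_plus ((g ^^ n) \<xi>) > 0 \<and> phi_plus ((g ^^ (n + 1)) \<xi>) \<le> 0}"

definition R2 :: "nat \<Rightarrow> param set" where
  "R2 n = {\<xi> \<in> Phi2. (g ^^ n) \<xi> \<in> Phi \<and> (g ^^ (n + 1)) \<xi> \<in> Phi \<and>
      phi_plus ((g ^^ n) \<xi>) > 0 \<and> phi_plus ((g ^^ (n + 1)) \<xi>) \<le> 0 \<and> alpha \<xi> < 0}"

end

theory Submission
  imports Defs
begin

lemma g_Phi1:
  assumes "\<xi> \<in> Phi2" "alpha \<xi> < 0"
  shows "g \<xi> \<in> Phi1"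
proof -
  obtain tL dL tR dR where x: "\<xi> = (tL, dL, tR, dR)" by (cases \<xi>) auto
  from assms have h: "tL > \<bar>dL + 1\<bar>" "tR < - \<bar>dR + 1\<bar>" "dL < 0" "dR < 0"
     "tL * tR + (dL - 1) * (dR - 1) < 0"
    by (auto simp: Phi2_def Phi_def alpha_def x)
  have "(dR + 1)^2 < tR^2"
  proof -
    have "\<bar>dR + 1\<bar> < \<bar>tR\<bar>" using h by linarith
    then show ?thesis by (metis abs_ge_zero power2_abs power_strict_mono zero_less_numeral)
  qed
  then have a: "tR\<^sup>2 - 2 * dR > \<bar>dR\<^sup>2 + 1\<bar>" by (simp add: power2_eq_square algebra_simps)
  have b: "tL * tR - dL - dR < - \<bar>dL * dR + 1\<bar>"
  proof -
    have "dL * dR > 0" using h by (simp add: mult_neg_neg)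
    then show ?thesis using h(5) by (simp add: algebra_simps)
  qed
  have c: "dR\<^sup>2 > 0" "dL * dR > 0" using h by (auto simp: mult_neg_neg)
  have gx: "g \<xi> = (tR\<^sup>2 - 2 * dR, dR\<^sup>2, tL * tR - dL - dR, dL * dR)"
    by (simp add: g_def x)
  have "(tR\<^sup>2 - 2 * dR, dR\<^sup>2, tL * tR - dL - dR, dL * dR) \<in> Phi"
    unfolding Phi_def mem_Collect_eq prod.case using a b by (intro conjI)
  then show ?thesis unfolding gx Phi1_def mem_Collect_eq prod.case using c by (intro conjI)
qed

theorem proposition7p1:
  fixes \<xi> :: param and n :: nat
  assumes "n \<ge> 1" and "\<xi> \<in> R2 n"
  shows "g \<xi> \<in> R1 (n - 1)"
proof -
  obtain m where m: "n = Suc m" using assms(1) by (cases n) auto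
  have e1: "(g ^^ m) (g \<xi>) = (g ^^ n) \<xi>"
    unfolding m funpow_Suc_right o_apply ..
  have e2: "(g ^^ (m + 1)) (g \<xi>) = (g ^^ (n + 1)) \<xi>"
    unfolding m Suc_eq_plus1[symmetric] funpow_Suc_right o_apply ..
  have r: "\<xi> \<in> Phi2" "(g ^^ n) \<xi> \<in> Phi" "(g ^^ (n + 1)) \<xi> \<in> Phi"
      "phi_plus ((g ^^ n) \<xi>) > 0" "phi_plus ((g ^^ (n + 1)) \<xi>) \<le> 0" "alpha \<xi> < 0"
    using assms(2) unfolding R2_def by blast+
  have nm: "n - 1 = m" using m by simp
  have "g \<xi> \<in> Phi1" using r g_Phi1 by blast
  then show ?thesis unfolding R1_def mem_Collect_eq nm e1 e2 using r by blast
qed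

end
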